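(* $\chi_i(C_4\Box C_5)\leq 6$ and $\chi_i(C_7\Box C_7)\leq 6$.
   Context: For a graph $G$, an incidence is a pair $(v,e)$ with $v\in V(G)$, $e\in E(G)$ and $v$ incident with $e$. Two incidences $(v,e)$ and $(w,f)$ are adjacent if $v=w$, or $e=f$, or the edge $vw$ equals $e$ or $f$. An incidence $k$-coloring of $G$ is a map from the set of incidences of $G$ to a set of $k$ colors such that adjacent incidences receive distinct colors; the incidence chromatic number $\chi_i(G)$ is the least such $k$. $C_n$ denotes the cycle on $n$ vertices and $\Box$ the Cartesian product of graphs: $G\Box H$ has vertex set $V(G)\times V(H)$, with $(u_1,v_1)$ adjacent to $(u_2,v_2)$ iff either $u_1=u_2$ and $v_1v_2\in E(H)$, or $v_1=v_2$ and $u_1u_2\in E(G)$. *)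

theory Defs
  imports Main
begin

text \<open>A graph is represented by a vertex set V and a set E of edges (2-element sets).\<close>

definition incidences :: "'a set \<Rightarrow> 'a set set \<Rightarrow> ('a \<times> 'a set) set" where
  "incidences V E = {(v, e). v \<in> V \<and> e \<in> E \<and> v \<in> e}"

definition inc_adjacent :: "('a \<times> 'a set) \<Rightarrow> ('a \<times> 'a set) \<Rightarrow> bool" where
  "inc_adjacent i j \<longleftrightarrow> (case (i, j) of ((v, e), (w, f)) \<Rightarrow>
      v = w \<or> e = f \<or> {v, w} = e \<or> {v, w} = f)"

definition incidence_coloring :: "'a set \<Rightarrow> 'a set set \<Rightarrow> nat \<Rightarrow> ('a \<times> 'a set \<Rightarrow> nat) \<Rightarrow> bool" where
  "incidence_coloring V E k c \<longleftrightarrow>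
     (\<forall>i\<in>incidences V E. c i < k) \<and>
     (\<forall>i\<in>incidences V E. \<forall>j\<in>incidences V E. i \<noteq> j \<and> inc_adjacent i j \<longrightarrow> c i \<noteq> c j)"

definition incidence_chromatic_number :: "'a set \<Rightarrow> 'a set set \<Rightarrow> nat" where
  "incidence_chromatic_number V E = (LEAST k. \<exists>c. incidence_coloring V E k c)"

definition cycle_V :: "nat \<Rightarrow> nat set" where
  "cycle_V n = {0..<n}"

definition cycle_E :: "nat \<Rightarrow> nat set set" where
  "cycle_E n = {{i, (i + 1) mod n} | i. i < n}"

definition cart_V :: "'a set \<Rightarrow> 'b set \<Rightarrow> ('a \<times> 'b) set" where
  "cart_V V1 V2 = V1 \<times> V2"

definition cart_E :: "'a set \<Rightarrow> 'a set set \<Rightarrow> 'b set \<Rightarrow> 'b set set \<Rightarrow> ('a \<times> 'b) set set" where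
  "cart_E V1 E1 V2 E2 =
     {{(u, v1), (u, v2)} | u v1 v2. u \<in> V1 \<and> {v1, v2} \<in> E2} \<union>
     {{(u1, v), (u2, v)} | u1 u2 v. v \<in> V2 \<and> {u1, u2} \<in> E1}"

end

theory Submission imports Defs begin

lemma generic:
  fixes V :: "'a set" and nb :: "'a \<Rightarrow> nat \<Rightarrow> 'a" and T :: "'a \<Rightarrow> nat \<Rightarrow> nat"
  assumes a1: "\<forall>e\<in>E. \<exists>p\<in>V. \<exists>d<D. e = {p, nb p d}"
  and b: "\<forall>p\<in>V. \<forall>d<D. nb p d \<in> V \<and> nb p d \<noteq> p"
  and c: "\<forall>p\<in>V. \<forall>d<D. \<forall>d'<D. nb p d = nb p d' \<longrightarrow> d = d'"
  and dd: "\<forall>p\<in>V. \<forall>d<D. \<exists>d'<D. nb (nb p d) d' = p"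
  and t1: "\<forall>p\<in>V. \<forall>d<D. T p d < k"
  and t2: "\<forall>p\<in>V. \<forall>d<D. \<forall>d'<D. d \<noteq> d' \<longrightarrow> T p d \<noteq> T p d'"
  and t3: "\<forall>p\<in>V. \<forall>d<D. \<forall>d'<D. T p d \<noteq> T (nb p d) d'"
  shows "incidence_coloring V E k (\<lambda>(v,e). T v (LEAST d. d < D \<and> e = {v, nb v d}))"
proof -
  define c where "c = (\<lambda>(v,e). T v (LEAST d. d < D \<and> e = {v, nb v d}))"
  have inc: "\<exists>d<D. e = {v, nb v d} \<and> v \<in> V" if "(v,e) \<in> incidences V E" for v e
  proof -
    from that have e: "e \<in> E" "v \<in> e" "v \<in> V" by (auto simp: incidences_def)
    then obtain p d where p: "p \<in> V" "d < D" "e = {p, nb p d}" using a1 by blast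
    show ?thesis
    proof (cases "v = p")
      case True then show ?thesis using p e by blast
    next
      case False
      then have "v = nb p d" using p e by auto
      moreover obtain d' where "d' < D" "nb (nb p d) d' = p" using dd p by blast
      ultimately show ?thesis using p e by (metis insert_commute)
    qed
  qed
  have cv: "c (v, {v, nb v d}) = T v d" if "v \<in> V" "d < D" for v d
  proof -
    have "(LEAST d'. d' < D \<and> {v, nb v d} = {v, nb v d'}) = d"
    proof (rule Least_equality)
      show "d < D \<and> {v, nb v d} = {v, nb v d}" using that by simp
    next
      fix y assume y: "y < D \<and> {v, nb v d} = {v, nb v y}"
      then have "nb v d = nb v y" using b that by (metis doubleton_eq_iff)
      then have "d = y" using c that y by blast
      then show "d \<le> y" by simp
    qed
    then show ?thesis unfolding c_def by simp
  qed
  have col: "\<exists>d<D. e = {v, nb v d} \<and> v \<in> V \<and> c (v,e) = T v d" if "(v,e) \<in> incidences V E" for v e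
    using inc[OF that] cv by blast
  show ?thesis unfolding c_def[symmetric] incidence_coloring_def
  proof (intro conjI ballI impI)
    fix i assume "i \<in> incidences V E"
    then obtain v e where "i = (v,e)" "(v,e) \<in> incidences V E" by (cases i) auto
    then obtain d where "d < D" "v \<in> V" "c (v,e) = T v d" using col by blast
    then show "c i < k" using t1 \<open>i = (v,e)\<close> by auto
  next
    fix i j assume i: "i \<in> incidences V E" and j: "j \<in> incidences V E" and ij: "i \<noteq> j \<and> inc_adjacent i j"
    obtain v e where ve: "i = (v,e)" by (cases i)
    obtain w f where wf: "j = (w,f)" by (cases j)
    obtain d where d: "d < D" "e = {v, nb v d}" "v \<in> V" "c (v,e) = T v d" using col i ve by blast
    obtain d' where d': "d' < D" "f = {w, nb w d'}" "w \<in> V" "c (w,f) = T w d'" using col j wf by blast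
    have adj: "v = w \<or> e = f \<or> {v, w} = e \<or> {v, w} = f" using ij ve wf by (simp add: inc_adjacent_def)
    have bv: "nb v d \<noteq> v" "nb w d' \<noteq> w" using b d d' by auto
    show "c i \<noteq> c j"
    proof (cases "v = w")
      case True
      then have "d \<noteq> d'" using ij ve wf d d' by auto
      then show ?thesis using t2 d d' ve wf True by auto
    next
      case False
      with adj d d' bv have "w = nb v d \<or> v = nb w d'" by (auto simp: doubleton_eq_iff)
      then show ?thesis
      proof
        assume "w = nb v d" then show ?thesis using t3 d d' ve wf by auto
      next
        assume "v = nb w d'" then show ?thesis using t3 d d' ve wf by metis
      qed
    qed
  qed
qed

definition tnb :: "nat \<Rightarrow> nat \<Rightarrow> nat\<times>nat \<Rightarrow> nat \<Rightarrow> nat\<times>nat" where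
 "tnb m n p d = (case p of (i,j) \<Rightarrow> if d=0 then (i,(j+1) mod n) else if d=1 then (i,(j+n-1) mod n)
     else if d=2 then ((i+1) mod m, j) else ((i+m-1) mod m, j))"

definition good :: "nat \<Rightarrow> nat \<Rightarrow> (nat\<times>nat \<Rightarrow> nat \<Rightarrow> nat) \<Rightarrow> bool" where
 "good m n T = list_all (\<lambda>i. list_all (\<lambda>j. list_all (\<lambda>d. let p=(i,j); q=tnb m n p d in
     fst q < m \<and> snd q < n \<and> q \<noteq> p \<and> T p d < 6 \<and>
     list_all (\<lambda>d'. (d' \<noteq> d \<longrightarrow> tnb m n p d' \<noteq> q \<and> T p d' \<noteq> T p d) \<and> T p d \<noteq> T q d') [0..<4] \<and>
     list_ex (\<lambda>d'. tnb m n q d' = p) [0..<4]) [0..<4]) [0..<n]) [0..<m]"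

lemma torus:
  assumes g: "good m n T"
  shows "incidence_chromatic_number (cart_V (cycle_V m) (cycle_V n))
           (cart_E (cycle_V m) (cycle_E m) (cycle_V n) (cycle_E n)) \<le> 6"
proof -
  let ?V = "cart_V (cycle_V m) (cycle_V n)"
  let ?E = "cart_E (cycle_V m) (cycle_E m) (cycle_V n) (cycle_E n)"
  let ?nb = "tnb m n"
  have V: "?V = {0..<m} \<times> {0..<n}" by (simp add: cart_V_def cycle_V_def)
  have G: "fst (?nb p d) < m" "snd (?nb p d) < n" "?nb p d \<noteq> p" "T p d < 6"
     "\<forall>d'<4. (d' \<noteq> d \<longrightarrow> ?nb p d' \<noteq> ?nb p d \<and> T p d' \<noteq> T p d) \<and> T p d \<noteq> T (?nb p d) d'"
     "\<exists>d'<4. ?nb (?nb p d) d' = p" if p: "p \<in> ?V" and d: "d < 4" for p d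
  proof -
    obtain i j where ij: "p = (i,j)" "i < m" "j < n" using p V by auto
    have "list_all (\<lambda>d. let p=(i,j); q=tnb m n p d in
     fst q < m \<and> snd q < n \<and> q \<noteq> p \<and> T p d < 6 \<and>
     list_all (\<lambda>d'. (d' \<noteq> d \<longrightarrow> tnb m n p d' \<noteq> q \<and> T p d' \<noteq> T p d) \<and> T p d \<noteq> T q d') [0..<4] \<and>
     list_ex (\<lambda>d'. tnb m n q d' = p) [0..<4]) [0..<4]"
      using g ij unfolding good_def list_all_iff by simp
    then have "let p=(i,j); q=tnb m n p d in
     fst q < m \<and> snd q < n \<and> q \<noteq> p \<and> T p d < 6 \<and>
     list_all (\<lambda>d'. (d' \<noteq> d \<longrightarrow> tnb m n p d' \<noteq> q \<and> T p d' \<noteq> T p d) \<and> T p d \<noteq> T q d') [0..<4] \<and>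
     list_ex (\<lambda>d'. tnb m n q d' = p) [0..<4]"
      using d unfolding list_all_iff by simp
    then show "fst (?nb p d) < m" "snd (?nb p d) < n" "?nb p d \<noteq> p" "T p d < 6"
     "\<forall>d'<4. (d' \<noteq> d \<longrightarrow> ?nb p d' \<noteq> ?nb p d \<and> T p d' \<noteq> T p d) \<and> T p d \<noteq> T (?nb p d) d'"
     "\<exists>d'<4. ?nb (?nb p d) d' = p"
      unfolding list_all_iff list_ex_iff Let_def ij(1) by auto
  qed
  have a1: "\<forall>e\<in>?E. \<exists>p\<in>?V. \<exists>d<4. e = {p, ?nb p d}"
  proof
    fix e assume "e \<in> ?E"
    then consider (h) u v1 v2 i where "e = {(u,v1),(u,v2)}" "u < m" "{v1,v2} = {i, (i+1) mod n}" "i < n"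
      | (v) u1 u2 v i where "e = {(u1,v),(u2,v)}" "v < n" "{u1,u2} = {i, (i+1) mod m}" "i < m"
      unfolding cart_E_def cycle_E_def cycle_V_def by auto
    then show "\<exists>p\<in>?V. \<exists>d<4. e = {p, ?nb p d}"
    proof cases
      case h
      have nb0: "?nb (u,i) 0 = (u, (i+1) mod n)" by (simp add: tnb_def)
      from h(3) have "(v1 = i \<and> v2 = (i+1) mod n) \<or> (v1 = (i+1) mod n \<and> v2 = i)" by (simp add: doubleton_eq_iff)
      then have "e = {(u,i), (u, (i+1) mod n)}" using h(1) by (auto simp: insert_commute)
      then have "e = {(u,i), ?nb (u,i) 0}" by (simp only: nb0)
      moreover have "(u,i) \<in> ?V" using h V by simp
      ultimately show ?thesis by (intro bexI[of _ "(u,i)"] exI[of _ 0]) auto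
    next
      case v
      have nb2: "?nb (i,v) 2 = ((i+1) mod m, v)" by (simp add: tnb_def)
      from v(3) have "(u1 = i \<and> u2 = (i+1) mod m) \<or> (u1 = (i+1) mod m \<and> u2 = i)" by (simp add: doubleton_eq_iff)
      then have "e = {(i,v), ((i+1) mod m, v)}" using v(1) by (auto simp: insert_commute)
      then have "e = {(i,v), ?nb (i,v) 2}" by (simp only: nb2)
      moreover have "(i,v) \<in> ?V" using v V by simp
      ultimately show ?thesis by (intro bexI[of _ "(i,v)"] exI[of _ 2]) auto
    qed
  qed
  have b: "\<forall>p\<in>?V. \<forall>d<4. ?nb p d \<in> ?V \<and> ?nb p d \<noteq> p"
  proof (intro ballI allI impI)
    fix p d assume pd: "p \<in> ?V" "d < (4::nat)"
    have "?nb p d \<in> {0..<m} \<times> {0..<n}" using G(1,2)[OF pd] by (simp add: mem_Times_iff)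
    then show "?nb p d \<in> ?V \<and> ?nb p d \<noteq> p" using G(3)[OF pd] V by simp
  qed
  have c: "\<forall>p\<in>?V. \<forall>d<4. \<forall>d'<4. ?nb p d = ?nb p d' \<longrightarrow> d = d'"
  proof (intro ballI allI impI)
    fix p d d' assume pd: "p \<in> ?V" "d < (4::nat)" and "d' < (4::nat)" "?nb p d = ?nb p d'"
    have X: "(d' \<noteq> d \<longrightarrow> ?nb p d' \<noteq> ?nb p d \<and> T p d' \<noteq> T p d) \<and> T p d \<noteq> T (?nb p d) d'"
      using mp[OF spec[OF G(5)[OF pd], of d'] \<open>d' < 4\<close>] .
    then show "d = d'" using \<open>?nb p d = ?nb p d'\<close> by metis
  qed
  have dd: "\<forall>p\<in>?V. \<forall>d<4. \<exists>d'<4. ?nb (?nb p d) d' = p" using G(6) by blast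
  have t1: "\<forall>p\<in>?V. \<forall>d<4. T p d < 6" using G(4) by blast
  have t2: "\<forall>p\<in>?V. \<forall>d<4. \<forall>d'<4. d \<noteq> d' \<longrightarrow> T p d \<noteq> T p d'"
  proof (intro ballI allI impI)
    fix p d d' assume pd: "p \<in> ?V" "d < (4::nat)" and "d' < (4::nat)" "d \<noteq> d'"
    then show "T p d \<noteq> T p d'" using G(5)[OF pd] by metis
  qed
  have t3: "\<forall>p\<in>?V. \<forall>d<4. \<forall>d'<4. T p d \<noteq> T (?nb p d) d'"
  proof (intro ballI allI impI)
    fix p d d' assume pd: "p \<in> ?V" "d < (4::nat)" and "d' < (4::nat)"
    have X: "(d' \<noteq> d \<longrightarrow> ?nb p d' \<noteq> ?nb p d \<and> T p d' \<noteq> T p d) \<and> T p d \<noteq> T (?nb p d) d'"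
      using mp[OF spec[OF G(5)[OF pd], of d'] \<open>d' < 4\<close>] .
    then show "T p d \<noteq> T (?nb p d) d'" by (rule conjunct2)
  qed
  have "incidence_coloring ?V ?E 6 (\<lambda>(v,e). T v (LEAST d. d < 4 \<and> e = {v, ?nb v d}))"
    by (rule generic[OF a1 b c dd t1 t2 t3])
  then have "\<exists>c. incidence_coloring ?V ?E 6 c" by blast
  then show ?thesis unfolding incidence_chromatic_number_def by (rule Least_le)
qed


definition tab45 :: "nat list list" where "tab45 = [[4, 1, 5, 3], [0, 2, 3, 1], [1, 5, 2, 3], [5, 0, 3, 2], [2, 4, 0, 3], [3, 0, 1, 2], [2, 4, 0, 5], [3, 1, 5, 4], [0, 2, 4, 1], [4, 5, 2, 1], [0, 2, 3, 4], [4, 5, 1, 3], [1, 2, 3, 0], [0, 5, 2, 3], [1, 4, 5, 3], [2, 5, 0, 1], [3, 4, 5, 0], [0, 2, 4, 5], [5, 3, 1, 4], [4, 0, 1, 2]]"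
definition T45 :: "nat\<times>nat \<Rightarrow> nat \<Rightarrow> nat" where "T45 p d = tab45 ! (fst p * 5 + snd p) ! d"
definition tab77 :: "nat list list" where "tab77 = [[0, 1, 4, 5], [5, 3, 2, 4], [3, 1, 2, 0], [4, 5, 2, 0], [0, 1, 2, 3], [2, 4, 3, 1], [3, 5, 0, 4], [2, 0, 1, 3], [4, 5, 0, 1], [1, 3, 0, 5], [5, 4, 0, 3], [3, 1, 0, 4], [1, 2, 5, 0], [5, 4, 3, 2], [4, 0, 3, 5], [5, 1, 2, 3], [3, 4, 1, 2], [2, 5, 4, 1], [4, 3, 1, 5], [0, 2, 1, 3], [2, 4, 5, 1], [2, 5, 0, 1], [1, 3, 5, 4], [3, 0, 4, 5], [5, 2, 1, 0], [2, 3, 4, 0], [0, 5, 3, 4], [4, 1, 2, 3], [5, 2, 1, 4], [4, 3, 1, 2], [1, 5, 3, 2], [4, 0, 5, 3], [3, 2, 0, 5], [2, 4, 0, 1], [3, 5, 1, 0], [2, 3, 4, 0], [3, 5, 4, 0], [5, 2, 0, 4], [0, 3, 4, 2], [2, 5, 3, 1], [3, 4, 1, 5], [5, 0, 4, 2], [2, 0, 3, 1], [3, 5, 0, 1], [4, 2, 5, 1], [2, 3, 1, 5], [1, 0, 5, 4], [0, 3, 5, 2], [5, 1, 2, 3]]"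
definition T77 :: "nat\<times>nat \<Rightarrow> nat \<Rightarrow> nat" where "T77 p d = tab77 ! (fst p * 7 + snd p) ! d"

lemma good45: "good 4 5 T45" by code_simp
lemma good77: "good 7 7 T77" by code_simp

theorem lemma4:
  shows "incidence_chromatic_number (cart_V (cycle_V 4) (cycle_V 5))
           (cart_E (cycle_V 4) (cycle_E 4) (cycle_V 5) (cycle_E 5)) \<le> 6
       \<and> incidence_chromatic_number (cart_V (cycle_V 7) (cycle_V 7))
           (cart_E (cycle_V 7) (cycle_E 7) (cycle_V 7) (cycle_E 7)) \<le> 6"
  using torus[OF good45] torus[OF good77] by simp

end
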